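(* Let $W$ be a channel from finite $\mathcal X$ to finite $\mathcal Y$ and $W'$ a channel from finite $\mathcal X'$ to finite $\mathcal Y'$, and let $W\times W'$ be the product channel from $\mathcal X\times\mathcal X'$ to $\mathcal Y\times\mathcal Y'$, $(W\times W')_{x,x'}(y,y')=W_x(y)W'_{x'}(y')$. Then \[ V^+_{W\times W'}=V^+_W+V^+_{W'},\qquad V^-_{W\times W'}=V^-_W+V^-_{W'}. \]
   Context: For a channel $W$ (a family of distributions $W_x$ on the output set) and an input distribution $P$: $W_P=\sum_xP(x)W_x$, $D$ is relative entropy (natural log), $I(P,W)=\sum_xP(x)D(W_x\|W_P)$, $C_W=\max_PI(P,W)$, $V_{P,W}=\sum_xP(x)\sum_yW_x(y)\big(\log\frac{W_x(y)}{W_P(y)}-D(W_x\|W_P)\big)^2$, $\mathcal V_W=\{P:I(P,W)=C_W\}$, $V^+_W=\max_{P\in\mathcal V_W}V_{P,W}$, $V^-_W=\min_{P\in\mathcal V_W}V_{P,W}$. *)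

theory Defs
  imports "HOL-Analysis.Analysis"
begin

definition is_distr :: "('a::finite \<Rightarrow> real) \<Rightarrow> bool" where
  "is_distr P \<longleftrightarrow> (\<forall>a. 0 \<le> P a) \<and> (\<Sum>a\<in>UNIV. P a) = 1"

definition is_channel :: "('x::finite \<Rightarrow> 'y::finite \<Rightarrow> real) \<Rightarrow> bool" where
  "is_channel W \<longleftrightarrow> (\<forall>x. is_distr (W x))"

definition out_distr :: "('x::finite \<Rightarrow> 'y::finite \<Rightarrow> real) \<Rightarrow> ('x \<Rightarrow> real) \<Rightarrow> 'y \<Rightarrow> real" where
  "out_distr W P y = (\<Sum>x\<in>UNIV. P x * W x y)"

text \<open>Relative entropy (natural log), with the convention 0 log(0/q) = 0.
  It is only used with P x > 0, where W_x is absolutely continuous w.r.t. W_P.\<close>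
definition rel_ent :: "('y::finite \<Rightarrow> real) \<Rightarrow> ('y \<Rightarrow> real) \<Rightarrow> real" where
  "rel_ent p q = (\<Sum>y\<in>UNIV. if p y = 0 then 0 else p y * ln (p y / q y))"

definition mutual_info :: "('x::finite \<Rightarrow> real) \<Rightarrow> ('x \<Rightarrow> 'y::finite \<Rightarrow> real) \<Rightarrow> real" where
  "mutual_info P W = (\<Sum>x\<in>UNIV. if P x = 0 then 0 else P x * rel_ent (W x) (out_distr W P))"

definition dispersion :: "('x::finite \<Rightarrow> real) \<Rightarrow> ('x \<Rightarrow> 'y::finite \<Rightarrow> real) \<Rightarrow> real" where
  "dispersion P W = (\<Sum>x\<in>UNIV. if P x = 0 then 0 else P x *
      (\<Sum>y\<in>UNIV. if W x y = 0 then 0 else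
         W x y * (ln (W x y / out_distr W P y) - rel_ent (W x) (out_distr W P))\<^sup>2))"

text \<open>Capacity C_W = max_P I(P,W) (the maximum exists; written as a supremum).\<close>
definition capacity :: "('x::finite \<Rightarrow> 'y::finite \<Rightarrow> real) \<Rightarrow> real" where
  "capacity W = (SUP P \<in> {P. is_distr P}. mutual_info P W)"

definition optimal_inputs :: "('x::finite \<Rightarrow> 'y::finite \<Rightarrow> real) \<Rightarrow> ('x \<Rightarrow> real) set" where
  "optimal_inputs W = {P. is_distr P \<and> mutual_info P W = capacity W}"

definition Vplus :: "('x::finite \<Rightarrow> 'y::finite \<Rightarrow> real) \<Rightarrow> real" where
  "Vplus W = (SUP P \<in> optimal_inputs W. dispersion P W)"

definition Vminus :: "('x::finite \<Rightarrow> 'y::finite \<Rightarrow> real) \<Rightarrow> real" where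
  "Vminus W = (INF P \<in> optimal_inputs W. dispersion P W)"

definition prod_channel ::
  "('x::finite \<Rightarrow> 'y::finite \<Rightarrow> real) \<Rightarrow> ('x'::finite \<Rightarrow> 'y'::finite \<Rightarrow> real)
     \<Rightarrow> ('x \<times> 'x' \<Rightarrow> 'y \<times> 'y' \<Rightarrow> real)" where
  "prod_channel W W' = (\<lambda>(x, x') (y, y'). W x y * W' x' y')"

end

theory Submission imports Defs "HOL-Real_Asymp.Real_Asymp" begin

definition xlnx :: "real \<Rightarrow> real" where "xlnx t = t * ln t"

lemma sum_univ_prod: "(\<Sum>z\<in>(UNIV::('a::finite \<times> 'b::finite) set). g z) = (\<Sum>x\<in>UNIV. \<Sum>x'\<in>UNIV. g (x, x'))"
  by (metis UNIV_Times_UNIV sum.cartesian_product')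

lemma rel_ent_simp: "rel_ent p q = (\<Sum>y\<in>UNIV. p y * ln (p y / q y))"
  unfolding rel_ent_def by (auto intro!: sum.cong)

lemma mutual_info_simp: "mutual_info P W = (\<Sum>x\<in>UNIV. P x * rel_ent (W x) (out_distr W P))"
  unfolding mutual_info_def by (auto intro!: sum.cong)

lemma dispersion_simp: "dispersion P W = (\<Sum>x\<in>UNIV. P x *
      (\<Sum>y\<in>UNIV. W x y * (ln (W x y / out_distr W P y) - rel_ent (W x) (out_distr W P))\<^sup>2))"
  unfolding dispersion_def by (auto intro!: sum.cong)

lemma distr_nonneg: "is_distr P \<Longrightarrow> 0 \<le> P a" by (simp add: is_distr_def)
lemma distr_sum: "is_distr P \<Longrightarrow> (\<Sum>a\<in>UNIV. P a) = 1" by (simp add: is_distr_def)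
lemma distr_le1: assumes "is_distr P" shows "P a \<le> 1"
proof -
  have "P a \<le> (\<Sum>a\<in>UNIV. P a)" by (rule member_le_sum) (auto simp: distr_nonneg[OF assms])
  thus ?thesis using distr_sum[OF assms] by simp
qed
lemma ch_nonneg: "is_channel W \<Longrightarrow> 0 \<le> W x y" by (simp add: is_channel_def is_distr_def)
lemma ch_sum: "is_channel W \<Longrightarrow> (\<Sum>y\<in>UNIV. W x y) = 1" by (simp add: is_channel_def is_distr_def)

lemma out_ge: assumes "is_distr P" "is_channel W" shows "P x * W x y \<le> out_distr W P y"
  unfolding out_distr_def
  by (rule member_le_sum[where f="\<lambda>x. P x * W x y"]) (auto intro!: mult_nonneg_nonneg distr_nonneg[OF assms(1)] ch_nonneg[OF assms(2)])

lemma out_pos: assumes "is_distr P" "is_channel W" "P x \<noteq> 0" "W x y \<noteq> 0" shows "0 < out_distr W P y"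
proof -
  have "0 < P x * W x y" using assms distr_nonneg[OF assms(1), of x] ch_nonneg[OF assms(2), of x y] by simp
  thus ?thesis using out_ge[OF assms(1,2)] by (meson less_le_trans)
qed

lemma out_distr_distr: assumes "is_distr P" "is_channel W" shows "is_distr (out_distr W P)"
proof -
  have "(\<Sum>y\<in>UNIV. out_distr W P y) = (\<Sum>x\<in>UNIV. P x * (\<Sum>y\<in>UNIV. W x y))"
    unfolding out_distr_def by (subst sum.swap) (simp add: sum_distrib_left mult.assoc)
  also have "\<dots> = 1" using ch_sum[OF assms(2)] distr_sum[OF assms(1)] by simp
  finally show ?thesis unfolding is_distr_def out_distr_def
    using distr_nonneg[OF assms(1)] ch_nonneg[OF assms(2)] by (auto intro!: sum_nonneg)
qed

lemma MI_eq: assumes "is_distr P" "is_channel W"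
  shows "mutual_info P W = (\<Sum>x\<in>UNIV. P x * (\<Sum>y\<in>UNIV. xlnx (W x y))) - (\<Sum>y\<in>UNIV. xlnx (out_distr W P y))"
proof -
  let ?Q = "out_distr W P"
  have t: "P x * (W x y * ln (W x y / ?Q y)) = P x * xlnx (W x y) - P x * W x y * ln (?Q y)" for x y
  proof (cases "P x = 0 \<or> W x y = 0")
    case True thus ?thesis by (auto simp: xlnx_def)
  next
    case False
    hence "0 < ?Q y" using out_pos[OF assms] by blast
    moreover have "0 < W x y" using False ch_nonneg[OF assms(2), of x y] by simp
    ultimately show ?thesis by (simp add: ln_divide_pos xlnx_def algebra_simps)
  qed
  have "mutual_info P W = (\<Sum>x\<in>UNIV. \<Sum>y\<in>UNIV. P x * xlnx (W x y) - P x * W x y * ln (?Q y))"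
    unfolding mutual_info_simp rel_ent_simp by (simp add: sum_distrib_left t)
  also have "\<dots> = (\<Sum>x\<in>UNIV. P x * (\<Sum>y\<in>UNIV. xlnx (W x y))) - (\<Sum>y\<in>UNIV. \<Sum>x\<in>UNIV. P x * W x y * ln (?Q y))"
    by (simp add: sum_subtractf sum_distrib_left) (subst sum.swap, rule refl)
  also have "(\<Sum>y\<in>UNIV. \<Sum>x\<in>UNIV. P x * W x y * ln (?Q y)) = (\<Sum>y\<in>UNIV. xlnx (?Q y))"
    unfolding xlnx_def out_distr_def by (simp add: sum_distrib_right)
  finally show ?thesis .
qed


lemma xlnx_tendsto_right: "((\<lambda>t::real. t * ln t) \<longlongrightarrow> 0) (at_right 0)" by real_asymp

lemma isCont_xlnx: "isCont xlnx t"
proof (cases "t = 0")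
  case False thus ?thesis unfolding xlnx_def by (intro continuous_intros) auto
next
  case True
  have r: "((\<lambda>t::real. t * ln t) \<longlongrightarrow> 0) (at_right 0)" by (rule xlnx_tendsto_right)
  have l: "((\<lambda>t::real. t * ln t) \<longlongrightarrow> 0) (at_left 0)"
  proof -
    have "((\<lambda>x::real. - (x * ln x)) \<longlongrightarrow> - 0) (at_right 0)" by (intro tendsto_minus r)
    thus ?thesis unfolding filterlim_at_left_to_right by (simp add: ln_minus)
  qed
  have "((\<lambda>t::real. t * ln t) \<longlongrightarrow> 0) (at 0)" using l r by (simp add: filterlim_at_split)
  thus ?thesis using True unfolding isCont_def xlnx_def by simp
qed

lemma continuous_on_xlnx [continuous_intros]: "continuous_on A f \<Longrightarrow> continuous_on A (\<lambda>v. xlnx (f v))"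
  by (rule continuous_on_compose2[of UNIV xlnx]) (auto intro!: continuous_at_imp_continuous_on isCont_xlnx)

lemma cap_attained:
  fixes W :: "'x::finite \<Rightarrow> 'y::finite \<Rightarrow> real"
  assumes "is_channel W"
  shows "\<exists>P. is_distr P \<and> (\<forall>P'. is_distr P' \<longrightarrow> mutual_info P' W \<le> mutual_info P W)"
proof -
  define S where "S = {v::real^'x. (\<forall>x. 0 \<le> v$x) \<and> (\<Sum>x\<in>UNIV. v$x) = 1}"
  define c where "c x = (\<Sum>y\<in>UNIV. xlnx (W x y))" for x
  define g where "g v = (\<Sum>x\<in>UNIV. v$x * c x) - (\<Sum>y\<in>UNIV. xlnx (\<Sum>x\<in>UNIV. v$x * W x y))" for v :: "real^'x"
  have sub: "S \<subseteq> cbox 0 (\<chi> i. 1)"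
  proof
    fix v assume "v \<in> S"
    hence d: "is_distr (\<lambda>x. v$x)" by (simp add: S_def is_distr_def)
    show "v \<in> cbox 0 (\<chi> i. 1)" unfolding mem_box_cart using distr_le1[OF d] distr_nonneg[OF d] by simp
  qed
  have cl: "closed S" unfolding S_def
    by (intro closed_Collect_conj closed_Collect_all closed_Collect_le closed_Collect_eq continuous_intros)
  have "compact (cbox 0 (\<chi> i. 1) \<inter> S)" by (rule compact_Int_closed[OF compact_cbox cl])
  hence cS: "compact S" using sub by (simp add: Int_absorb1)
  have ne: "S \<noteq> {}"
  proof -
    have "(\<chi> x. 1 / real CARD('x)) \<in> S" unfolding S_def by auto
    thus ?thesis by blast
  qed
  have co: "continuous_on S g" unfolding g_def by (intro continuous_intros)
  obtain v where v: "v \<in> S" "\<And>u. u \<in> S \<Longrightarrow> g u \<le> g v"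
    using continuous_attains_sup[OF cS ne co] by blast
  have gMI: "is_distr (\<lambda>x. u$x) \<Longrightarrow> g u = mutual_info (\<lambda>x. u$x) W" for u
    unfolding g_def c_def by (simp add: MI_eq[OF _ assms] out_distr_def)
  have dv: "is_distr (\<lambda>x. v$x)" using v(1) by (simp add: S_def is_distr_def)
  show ?thesis
  proof (intro exI conjI allI impI)
    show "is_distr (\<lambda>x. v$x)" by (rule dv)
    fix P' :: "'x \<Rightarrow> real" assume d: "is_distr P'"
    have "(\<chi> x. P' x) \<in> S" using d by (simp add: S_def is_distr_def)
    hence "g (\<chi> x. P' x) \<le> g v" by (rule v(2))
    moreover have "g (\<chi> x. P' x) = mutual_info P' W" using gMI[of "\<chi> x. P' x"] d by simp
    ultimately show "mutual_info P' W \<le> mutual_info (\<lambda>x. v$x) W" using gMI[OF dv] by simp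
  qed
qed


lemma cap_props:
  fixes W :: "'x::finite \<Rightarrow> 'y::finite \<Rightarrow> real"
  assumes "is_channel W"
  shows "\<exists>P. is_distr P \<and> mutual_info P W = capacity W"
    and "is_distr P \<Longrightarrow> mutual_info P W \<le> capacity W"
proof -
  obtain P0 where P0: "is_distr P0" "\<And>P'. is_distr P' \<Longrightarrow> mutual_info P' W \<le> mutual_info P0 W"
    using cap_attained[OF assms] by blast
  have bdd: "bdd_above ((\<lambda>P. mutual_info P W) ` {P. is_distr P})"
    using P0 by (auto intro!: bdd_aboveI)
  have "capacity W = mutual_info P0 W"
    unfolding capacity_def
  proof (rule antisym)
    show "(SUP P\<in>{P. is_distr P}. mutual_info P W) \<le> mutual_info P0 W"
      using P0 by (intro cSUP_least) auto
    show "mutual_info P0 W \<le> (SUP P\<in>{P. is_distr P}. mutual_info P W)"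
      using P0 bdd by (intro cSUP_upper) auto
  qed
  thus "\<exists>P. is_distr P \<and> mutual_info P W = capacity W" using P0 by auto
  show "is_distr P \<Longrightarrow> mutual_info P W \<le> capacity W" using P0 \<open>capacity W = _\<close> by simp
qed

lemma gibbs_pt:
  fixes q r :: real
  assumes "0 \<le> q" "0 \<le> r" "r = 0 \<Longrightarrow> q = 0"
  shows "0 \<le> xlnx q - q * ln r - q + r" and "xlnx q - q * ln r - q + r = 0 \<Longrightarrow> q = r"
proof -
  have "0 \<le> xlnx q - q * ln r - q + r \<and> (xlnx q - q * ln r - q + r = 0 \<longrightarrow> q = r)"
  proof (cases "q = 0")
    case True thus ?thesis using assms by (simp add: xlnx_def)
  next
    case False
    hence qp: "0 < q" using assms by simp
    hence rp: "0 < r" using assms by force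
    define t where "t = r / q"
    have tp: "0 < t" using qp rp by (simp add: t_def)
    have lt: "ln t = ln r - ln q" using qp rp by (simp add: t_def ln_divide_pos)
    have e: "xlnx q - q * ln r - q + r = q * (t - 1 - ln t)"
    proof -
      have qt: "q * t = r" using qp by (simp add: t_def)
      have "q * (t - 1 - ln t) = q*t - q - q * ln r + q * ln q" by (simp add: lt algebra_simps)
      thus ?thesis using qt by (simp add: xlnx_def)
    qed
    have "0 \<le> t - 1 - ln t" using ln_le_minus_one[OF tp] by simp
    moreover have "q * (t - 1 - ln t) = 0 \<Longrightarrow> q = r"
    proof -
      assume "q * (t - 1 - ln t) = 0"
      hence "ln t = t - 1" using qp by simp
      hence "t = 1" using ln_eq_minus_one tp by blast
      thus "q = r" using qp by (simp add: t_def)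
    qed
    ultimately show ?thesis using e qp by simp
  qed
  thus "0 \<le> xlnx q - q * ln r - q + r" and "xlnx q - q * ln r - q + r = 0 \<Longrightarrow> q = r" by auto
qed

lemma gibbs:
  fixes q r :: "'a::finite \<Rightarrow> real"
  assumes "is_distr q" "is_distr r" "\<And>z. r z = 0 \<Longrightarrow> q z = 0"
  shows "(\<Sum>z\<in>UNIV. q z * ln (r z)) \<le> (\<Sum>z\<in>UNIV. xlnx (q z))"
    and "(\<Sum>z\<in>UNIV. q z * ln (r z)) = (\<Sum>z\<in>UNIV. xlnx (q z)) \<Longrightarrow> q = r"
proof -
  define g where "g z = xlnx (q z) - q z * ln (r z) - q z + r z" for z
  have g0: "0 \<le> g z" for z unfolding g_def
    by (rule gibbs_pt(1)) (use assms distr_nonneg in auto)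
  have sg: "(\<Sum>z\<in>UNIV. g z) = (\<Sum>z\<in>UNIV. xlnx (q z)) - (\<Sum>z\<in>UNIV. q z * ln (r z))"
    unfolding g_def using distr_sum[OF assms(1)] distr_sum[OF assms(2)]
    by (simp add: sum.distrib sum_subtractf)
  have "0 \<le> (\<Sum>z\<in>UNIV. g z)" by (rule sum_nonneg) (use g0 in auto)
  thus "(\<Sum>z\<in>UNIV. q z * ln (r z)) \<le> (\<Sum>z\<in>UNIV. xlnx (q z))" using sg by simp
  assume "(\<Sum>z\<in>UNIV. q z * ln (r z)) = (\<Sum>z\<in>UNIV. xlnx (q z))"
  hence "(\<Sum>z\<in>UNIV. g z) = 0" using sg by simp
  hence "\<forall>z\<in>UNIV. g z = 0" using sum_nonneg_eq_0_iff[of UNIV g] g0 by auto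
  thus "q = r" unfolding g_def
    using gibbs_pt(2) assms distr_nonneg by (metis UNIV_I ext)
qed


definition marg1 :: "('a::finite \<times> 'b::finite \<Rightarrow> real) \<Rightarrow> 'a \<Rightarrow> real" where
  "marg1 R x = (\<Sum>x'\<in>UNIV. R (x, x'))"
definition marg2 :: "('a::finite \<times> 'b::finite \<Rightarrow> real) \<Rightarrow> 'b \<Rightarrow> real" where
  "marg2 R x' = (\<Sum>x\<in>UNIV. R (x, x'))"
definition pprod :: "('a \<Rightarrow> real) \<Rightarrow> ('b \<Rightarrow> real) \<Rightarrow> 'a \<times> 'b \<Rightarrow> real" where
  "pprod P P' z = P (fst z) * P' (snd z)"

lemma prod_channel_app: "prod_channel W W' z w = W (fst z) (fst w) * W' (snd z) (snd w)"
  by (simp add: prod_channel_def split: prod.split)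

lemma marg1_distr: assumes "is_distr R" shows "is_distr (marg1 R)"
  using assms unfolding is_distr_def marg1_def
  by (auto intro!: sum_nonneg simp: sum_univ_prod[symmetric])

lemma marg2_distr: assumes "is_distr R" shows "is_distr (marg2 R)"
proof -
  have "(\<Sum>x'\<in>UNIV. \<Sum>x\<in>UNIV. R (x, x')) = (\<Sum>x\<in>UNIV. \<Sum>x'\<in>UNIV. R (x, x'))" by (rule sum.swap)
  thus ?thesis using assms unfolding is_distr_def marg2_def
    by (auto intro!: sum_nonneg simp: sum_univ_prod[symmetric])
qed

lemma pprod_distr: assumes "is_distr P" "is_distr P'" shows "is_distr (pprod P P')"
  using assms unfolding is_distr_def pprod_def
  by (auto simp: sum_univ_prod sum_distrib_left[symmetric] sum_distrib_right[symmetric])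

lemma marg1_pprod: "is_distr P' \<Longrightarrow> marg1 (pprod P P') = P"
  by (auto simp: marg1_def pprod_def sum_distrib_left[symmetric] distr_sum)
lemma marg2_pprod: "is_distr P \<Longrightarrow> marg2 (pprod P P') = P'"
  by (auto simp: marg2_def pprod_def sum_distrib_right[symmetric] distr_sum)

lemma prod_channel_is: assumes "is_channel W" "is_channel W'" shows "is_channel (prod_channel W W')"
  unfolding is_channel_def
proof
  fix z
  show "is_distr (prod_channel W W' z)"
    using assms unfolding is_channel_def is_distr_def
    by (auto simp: prod_channel_app sum_univ_prod sum_distrib_left[symmetric] sum_distrib_right[symmetric])
qed

lemma out_prod: "out_distr (prod_channel W W') R (y, y') = (\<Sum>x\<in>UNIV. \<Sum>x'\<in>UNIV. R (x, x') * (W x y * W' x' y'))"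
  unfolding out_distr_def by (simp add: sum_univ_prod prod_channel_app)

lemma out_marg1: assumes "is_channel W'"
  shows "(\<Sum>y'\<in>UNIV. out_distr (prod_channel W W') R (y, y')) = out_distr W (marg1 R) y"
proof -
  have "(\<Sum>y'\<in>UNIV. out_distr (prod_channel W W') R (y, y'))
      = (\<Sum>x\<in>UNIV. \<Sum>x'\<in>UNIV. \<Sum>y'\<in>UNIV. R (x, x') * (W x y * W' x' y'))"
    unfolding out_prod by (subst sum.swap, subst (2) sum.swap, rule refl)
  also have "\<dots> = (\<Sum>x\<in>UNIV. \<Sum>x'\<in>UNIV. R (x, x') * W x y)"
    by (simp add: sum_distrib_left[symmetric] mult.assoc ch_sum[OF assms])
  also have "\<dots> = out_distr W (marg1 R) y"
    unfolding out_distr_def marg1_def by (simp add: sum_distrib_right)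
  finally show ?thesis .
qed

lemma out_marg2: assumes "is_channel W"
  shows "(\<Sum>y\<in>UNIV. out_distr (prod_channel W W') R (y, y')) = out_distr W' (marg2 R) y'"
proof -
  have "(\<Sum>y\<in>UNIV. out_distr (prod_channel W W') R (y, y'))
      = (\<Sum>x'\<in>UNIV. \<Sum>x\<in>UNIV. \<Sum>y\<in>UNIV. R (x, x') * (W x y * W' x' y'))"
    unfolding out_prod by (subst sum.swap, subst (2) sum.swap, subst sum.swap, rule refl)
  also have "\<dots> = (\<Sum>x'\<in>UNIV. \<Sum>x\<in>UNIV. R (x, x') * W' x' y')"
  proof -
    have "(\<Sum>y\<in>UNIV. R (x, x') * (W x y * W' x' y')) = R (x, x') * W' x' y'" for x x'
      using ch_sum[OF assms, of x] by (simp add: sum_distrib_left[symmetric] sum_distrib_right[symmetric] algebra_simps)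
    thus ?thesis by simp
  qed
  also have "\<dots> = out_distr W' (marg2 R) y'"
    unfolding out_distr_def marg2_def by (simp add: sum_distrib_right)
  finally show ?thesis .
qed

lemma out_pprod: "out_distr (prod_channel W W') (pprod P P') (y, y') = out_distr W P y * out_distr W' P' y'"
  apply (simp only: out_prod)
  apply (simp add: out_distr_def pprod_def sum_product)
  apply (intro sum.cong refl)
  apply (simp add: algebra_simps)
  done


lemma xlnx_mult: "xlnx (a * b) = b * xlnx a + a * xlnx b"
  by (auto simp: xlnx_def ln_mult algebra_simps)

lemma out_le_marg: assumes "is_distr R" "is_channel W" "is_channel W'"
  shows "out_distr (prod_channel W W') R (y, y') \<le> out_distr W (marg1 R) y"
    and "out_distr (prod_channel W W') R (y, y') \<le> out_distr W' (marg2 R) y'"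
proof -
  have nn: "0 \<le> out_distr (prod_channel W W') R w" for w
    by (rule distr_nonneg[OF out_distr_distr[OF assms(1) prod_channel_is[OF assms(2,3)]]])
  show "out_distr (prod_channel W W') R (y, y') \<le> out_distr W (marg1 R) y"
    unfolding out_marg1[OF assms(3), symmetric]
    by (rule member_le_sum[where f="\<lambda>y'. out_distr (prod_channel W W') R (y, y')"]) (auto intro: nn)
  show "out_distr (prod_channel W W') R (y, y') \<le> out_distr W' (marg2 R) y'"
    unfolding out_marg2[OF assms(2), symmetric]
    by (rule member_le_sum[where f="\<lambda>y. out_distr (prod_channel W W') R (y, y')"]) (auto intro: nn)
qed

lemma MI_decomp:
  fixes W :: "'x::finite \<Rightarrow> 'y::finite \<Rightarrow> real"
    and W' :: "'x'::finite \<Rightarrow> 'y'::finite \<Rightarrow> real"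
  assumes R: "is_distr R" and ch: "is_channel W" "is_channel W'"
  shows "mutual_info R (prod_channel W W') = mutual_info (marg1 R) W + mutual_info (marg2 R) W'
     - ((\<Sum>z\<in>UNIV. xlnx (out_distr (prod_channel W W') R z))
        - (\<Sum>z\<in>UNIV. out_distr (prod_channel W W') R z * ln (out_distr W (marg1 R) (fst z) * out_distr W' (marg2 R) (snd z))))"
proof -
  let ?QR = "out_distr (prod_channel W W') R"
  let ?Q1 = "out_distr W (marg1 R)" and ?Q2 = "out_distr W' (marg2 R)"
  define c where "c x = (\<Sum>y\<in>UNIV. xlnx (W x y))" for x
  define c' where "c' x' = (\<Sum>y'\<in>UNIV. xlnx (W' x' y'))" for x'
  have chp: "is_channel (prod_channel W W')" by (rule prod_channel_is[OF ch])
  have B: "(\<Sum>w\<in>UNIV. xlnx (prod_channel W W' z w)) = c (fst z) + c' (snd z)" for z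
  proof -
    have "(\<Sum>w\<in>UNIV. xlnx (prod_channel W W' z w))
        = (\<Sum>y\<in>UNIV. \<Sum>y'\<in>UNIV. W' (snd z) y' * xlnx (W (fst z) y) + W (fst z) y * xlnx (W' (snd z) y'))"
      by (simp add: sum_univ_prod prod_channel_app xlnx_mult)
    also have "\<dots> = c (fst z) + c' (snd z)"
      using ch_sum[OF ch(1), of "fst z"] ch_sum[OF ch(2), of "snd z"]
      by (simp add: sum.distrib c_def c'_def sum_distrib_left[symmetric] sum_distrib_right[symmetric])
    finally show ?thesis .
  qed
  have C: "(\<Sum>z\<in>UNIV. R z * (\<Sum>w\<in>UNIV. xlnx (prod_channel W W' z w)))
      = (\<Sum>x\<in>UNIV. marg1 R x * c x) + (\<Sum>x'\<in>UNIV. marg2 R x' * c' x')"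
  proof -
    have "(\<Sum>z\<in>UNIV. R z * (\<Sum>w\<in>UNIV. xlnx (prod_channel W W' z w)))
        = (\<Sum>x\<in>UNIV. \<Sum>x'\<in>UNIV. R (x, x') * c x) + (\<Sum>x\<in>UNIV. \<Sum>x'\<in>UNIV. R (x, x') * c' x')"
      by (simp add: B sum_univ_prod algebra_simps sum.distrib)
    also have "\<dots> = (\<Sum>x\<in>UNIV. marg1 R x * c x) + (\<Sum>x'\<in>UNIV. marg2 R x' * c' x')"
      unfolding marg1_def marg2_def by (subst (2) sum.swap) (simp add: sum_distrib_right)
    finally show ?thesis .
  qed
  have Dpt: "?QR (y, y') * ln (?Q1 y * ?Q2 y') = ?QR (y, y') * ln (?Q1 y) + ?QR (y, y') * ln (?Q2 y')" for y y'
  proof (cases "?QR (y, y') = 0")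
    case True thus ?thesis by simp
  next
    case False
    hence "0 < ?QR (y, y')" using distr_nonneg[OF out_distr_distr[OF R chp], of "(y,y')"] by simp
    hence "0 < ?Q1 y" "0 < ?Q2 y'" using out_le_marg[OF R ch, of y y'] by auto
    thus ?thesis by (simp add: ln_mult algebra_simps)
  qed
  have D: "(\<Sum>z\<in>UNIV. ?QR z * ln (?Q1 (fst z) * ?Q2 (snd z))) = (\<Sum>y\<in>UNIV. xlnx (?Q1 y)) + (\<Sum>y'\<in>UNIV. xlnx (?Q2 y'))"
  proof -
    have "(\<Sum>z\<in>UNIV. ?QR z * ln (?Q1 (fst z) * ?Q2 (snd z)))
        = (\<Sum>y\<in>UNIV. \<Sum>y'\<in>UNIV. ?QR (y, y') * ln (?Q1 y)) + (\<Sum>y\<in>UNIV. \<Sum>y'\<in>UNIV. ?QR (y, y') * ln (?Q2 y'))"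
      by (simp add: sum_univ_prod Dpt sum.distrib)
    also have "(\<Sum>y\<in>UNIV. \<Sum>y'\<in>UNIV. ?QR (y, y') * ln (?Q1 y)) = (\<Sum>y\<in>UNIV. xlnx (?Q1 y))"
      by (simp add: sum_distrib_right[symmetric] out_marg1[OF ch(2)] xlnx_def)
    also have "(\<Sum>y\<in>UNIV. \<Sum>y'\<in>UNIV. ?QR (y, y') * ln (?Q2 y')) = (\<Sum>y'\<in>UNIV. xlnx (?Q2 y'))"
      by (subst sum.swap) (simp add: sum_distrib_right[symmetric] out_marg2[OF ch(1)] xlnx_def)
    finally show ?thesis .
  qed
  show ?thesis
    unfolding MI_eq[OF R chp] MI_eq[OF marg1_distr[OF R] ch(1)] MI_eq[OF marg2_distr[OF R] ch(2)]
    unfolding C D c_def c'_def by simp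
qed


lemma out_pprod': "out_distr (prod_channel W W') (pprod P P') = pprod (out_distr W P) (out_distr W' P')"
proof
  fix z show "out_distr (prod_channel W W') (pprod P P') z = pprod (out_distr W P) (out_distr W' P') z"
    by (cases z) (simp add: out_pprod pprod_def)
qed

lemma gap:
  fixes W :: "'x::finite \<Rightarrow> 'y::finite \<Rightarrow> real"
    and W' :: "'x'::finite \<Rightarrow> 'y'::finite \<Rightarrow> real"
  assumes R: "is_distr R" and ch: "is_channel W" "is_channel W'"
  defines "QR \<equiv> out_distr (prod_channel W W') R"
      and "Q12 \<equiv> pprod (out_distr W (marg1 R)) (out_distr W' (marg2 R))"
  shows "(\<Sum>z\<in>UNIV. QR z * ln (Q12 z)) \<le> (\<Sum>z\<in>UNIV. xlnx (QR z))"
    and "(\<Sum>z\<in>UNIV. QR z * ln (Q12 z)) = (\<Sum>z\<in>UNIV. xlnx (QR z)) \<Longrightarrow> QR = Q12"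
proof -
  have d1: "is_distr QR" unfolding QR_def by (rule out_distr_distr[OF R prod_channel_is[OF ch]])
  have d2: "is_distr Q12" unfolding Q12_def
    by (intro pprod_distr out_distr_distr marg1_distr marg2_distr R ch)
  have z: "Q12 z = 0 \<Longrightarrow> QR z = 0" for z
  proof -
    assume a: "Q12 z = 0"
    obtain y y' where zz: "z = (y, y')" by (cases z)
    have "out_distr W (marg1 R) y = 0 \<or> out_distr W' (marg2 R) y' = 0" using a by (simp add: Q12_def pprod_def zz)
    hence "QR z \<le> 0" using out_le_marg[OF R ch, of y y'] unfolding QR_def zz by auto
    thus "QR z = 0" using distr_nonneg[OF d1, of z] by simp
  qed
  show "(\<Sum>z\<in>UNIV. QR z * ln (Q12 z)) \<le> (\<Sum>z\<in>UNIV. xlnx (QR z))" by (rule gibbs(1)[OF d1 d2 z])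
  show "(\<Sum>z\<in>UNIV. QR z * ln (Q12 z)) = (\<Sum>z\<in>UNIV. xlnx (QR z)) \<Longrightarrow> QR = Q12" by (rule gibbs(2)[OF d1 d2 z])
qed

lemma MI_pprod:
  fixes W :: "'x::finite \<Rightarrow> 'y::finite \<Rightarrow> real"
    and W' :: "'x'::finite \<Rightarrow> 'y'::finite \<Rightarrow> real"
  assumes d: "is_distr P" "is_distr P'" and ch: "is_channel W" "is_channel W'"
  shows "mutual_info (pprod P P') (prod_channel W W') = mutual_info P W + mutual_info P' W'"
  using MI_decomp[OF pprod_distr[OF d] ch]
  by (simp add: marg1_pprod[OF d(2)] marg2_pprod[OF d(1)] out_pprod' xlnx_def pprod_def[symmetric])

lemma MI_le_sum:
  fixes W :: "'x::finite \<Rightarrow> 'y::finite \<Rightarrow> real"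
    and W' :: "'x'::finite \<Rightarrow> 'y'::finite \<Rightarrow> real"
  assumes R: "is_distr R" and ch: "is_channel W" "is_channel W'"
  shows "mutual_info R (prod_channel W W') \<le> mutual_info (marg1 R) W + mutual_info (marg2 R) W'"
    and "mutual_info R (prod_channel W W') = mutual_info (marg1 R) W + mutual_info (marg2 R) W'
      \<Longrightarrow> out_distr (prod_channel W W') R = pprod (out_distr W (marg1 R)) (out_distr W' (marg2 R))"
  using MI_decomp[OF R ch] gap[OF R ch] by (auto simp: pprod_def)

lemma cap_prod:
  fixes W :: "'x::finite \<Rightarrow> 'y::finite \<Rightarrow> real"
    and W' :: "'x'::finite \<Rightarrow> 'y'::finite \<Rightarrow> real"
  assumes ch: "is_channel W" "is_channel W'"
  shows "capacity (prod_channel W W') = capacity W + capacity W'"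
proof -
  obtain P where P: "is_distr P" "mutual_info P W = capacity W" using cap_props(1)[OF ch(1)] by blast
  obtain P' where P': "is_distr P'" "mutual_info P' W' = capacity W'" using cap_props(1)[OF ch(2)] by blast
  obtain R where R: "is_distr R" "mutual_info R (prod_channel W W') = capacity (prod_channel W W')"
    using cap_props(1)[OF prod_channel_is[OF ch]] by blast
  have "capacity W + capacity W' \<le> capacity (prod_channel W W')"
    using cap_props(2)[OF prod_channel_is[OF ch] pprod_distr[OF P(1) P'(1)]] MI_pprod[OF P(1) P'(1) ch] P P' by simp
  moreover have "capacity (prod_channel W W') \<le> capacity W + capacity W'"
    using MI_le_sum(1)[OF R(1) ch] R(2) cap_props(2)[OF ch(1) marg1_distr[OF R(1)]] cap_props(2)[OF ch(2) marg2_distr[OF R(1)]]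
    by simp
  ultimately show ?thesis by simp
qed

lemma opt_prod1:
  fixes W :: "'x::finite \<Rightarrow> 'y::finite \<Rightarrow> real"
    and W' :: "'x'::finite \<Rightarrow> 'y'::finite \<Rightarrow> real"
  assumes ch: "is_channel W" "is_channel W'" and R: "R \<in> optimal_inputs (prod_channel W W')"
  shows "marg1 R \<in> optimal_inputs W" "marg2 R \<in> optimal_inputs W'"
    "out_distr (prod_channel W W') R = pprod (out_distr W (marg1 R)) (out_distr W' (marg2 R))"
proof -
  have Rd: "is_distr R" and Rm: "mutual_info R (prod_channel W W') = capacity W + capacity W'"
    using R cap_prod[OF ch] by (auto simp: optimal_inputs_def)
  have a: "mutual_info (marg1 R) W \<le> capacity W" by (rule cap_props(2)[OF ch(1) marg1_distr[OF Rd]])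
  have b: "mutual_info (marg2 R) W' \<le> capacity W'" by (rule cap_props(2)[OF ch(2) marg2_distr[OF Rd]])
  have c: "mutual_info R (prod_channel W W') \<le> mutual_info (marg1 R) W + mutual_info (marg2 R) W'"
    by (rule MI_le_sum(1)[OF Rd ch])
  have e1: "mutual_info (marg1 R) W = capacity W" and e2: "mutual_info (marg2 R) W' = capacity W'"
    using a b c Rm by linarith+
  show "marg1 R \<in> optimal_inputs W" using e1 marg1_distr[OF Rd] by (simp add: optimal_inputs_def)
  show "marg2 R \<in> optimal_inputs W'" using e2 marg2_distr[OF Rd] by (simp add: optimal_inputs_def)
  show "out_distr (prod_channel W W') R = pprod (out_distr W (marg1 R)) (out_distr W' (marg2 R))"
    using MI_le_sum(2)[OF Rd ch] e1 e2 Rm by simp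
qed

lemma opt_prod2:
  fixes W :: "'x::finite \<Rightarrow> 'y::finite \<Rightarrow> real"
    and W' :: "'x'::finite \<Rightarrow> 'y'::finite \<Rightarrow> real"
  assumes ch: "is_channel W" "is_channel W'" and P: "P \<in> optimal_inputs W" and P': "P' \<in> optimal_inputs W'"
  shows "pprod P P' \<in> optimal_inputs (prod_channel W W')"
  using P P' MI_pprod[OF _ _ ch, of P P'] cap_prod[OF ch] pprod_distr[of P P']
  by (simp add: optimal_inputs_def)


lemma dsum_prod: "(\<Sum>y\<in>A. \<Sum>y'\<in>B. F y * G y') = (\<Sum>y\<in>A. F y) * (\<Sum>y'\<in>B. (G y' :: real))"
  by (simp add: sum_product)

lemma double_sq_sum:
  fixes a :: "'a::finite \<Rightarrow> real" and b :: "'b::finite \<Rightarrow> real"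
  shows "(\<Sum>y\<in>UNIV. \<Sum>y'\<in>UNIV. a y * b y' * (f y + g y')\<^sup>2)
    = (\<Sum>y\<in>UNIV. a y * (f y)\<^sup>2) * (\<Sum>y'\<in>UNIV. b y') + 2 * (\<Sum>y\<in>UNIV. a y * f y) * (\<Sum>y'\<in>UNIV. b y' * g y')
      + (\<Sum>y\<in>UNIV. a y) * (\<Sum>y'\<in>UNIV. b y' * (g y')\<^sup>2)"
proof -
  have "(\<Sum>y\<in>UNIV. \<Sum>y'\<in>UNIV. a y * b y' * (f y + g y')\<^sup>2)
     = (\<Sum>y\<in>UNIV. \<Sum>y'\<in>UNIV. (a y * (f y)\<^sup>2) * b y' + (2 * a y * f y) * (b y' * g y') + a y * (b y' * (g y')\<^sup>2))"
    by (intro sum.cong refl) (simp add: power2_sum algebra_simps)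
  also have "\<dots> = (\<Sum>y\<in>UNIV. \<Sum>y'\<in>UNIV. (a y * (f y)\<^sup>2) * b y') + (\<Sum>y\<in>UNIV. \<Sum>y'\<in>UNIV. (2 * a y * f y) * (b y' * g y'))
      + (\<Sum>y\<in>UNIV. \<Sum>y'\<in>UNIV. a y * (b y' * (g y')\<^sup>2))"
    by (simp only: sum.distrib)
  also have "\<dots> = (\<Sum>y\<in>UNIV. a y * (f y)\<^sup>2) * (\<Sum>y'\<in>UNIV. b y') + (\<Sum>y\<in>UNIV. 2 * a y * f y) * (\<Sum>y'\<in>UNIV. b y' * g y')
      + (\<Sum>y\<in>UNIV. a y) * (\<Sum>y'\<in>UNIV. b y' * (g y')\<^sup>2)"
    by (simp only: dsum_prod)
  also have "(\<Sum>y\<in>UNIV. 2 * a y * f y) = 2 * (\<Sum>y\<in>UNIV. a y * f y)"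
    by (simp add: sum_distrib_left mult.assoc)
  finally show ?thesis by simp
qed

lemma inner_split:
  fixes W :: "'x::finite \<Rightarrow> 'y::finite \<Rightarrow> real"
    and W' :: "'x'::finite \<Rightarrow> 'y'::finite \<Rightarrow> real"
  assumes R: "is_distr R" and ch: "is_channel W" "is_channel W'"
    and hQ: "out_distr (prod_channel W W') R = pprod (out_distr W (marg1 R)) (out_distr W' (marg2 R))"
    and pos: "R (x, x') \<noteq> 0"
  shows "(\<Sum>w\<in>UNIV. prod_channel W W' (x, x') w * (ln (prod_channel W W' (x, x') w / out_distr (prod_channel W W') R w)
            - rel_ent (prod_channel W W' (x, x')) (out_distr (prod_channel W W') R))\<^sup>2)
    = (\<Sum>y\<in>UNIV. W x y * (ln (W x y / out_distr W (marg1 R) y) - rel_ent (W x) (out_distr W (marg1 R)))\<^sup>2)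
      + (\<Sum>y'\<in>UNIV. W' x' y' * (ln (W' x' y' / out_distr W' (marg2 R) y') - rel_ent (W' x') (out_distr W' (marg2 R)))\<^sup>2)"
proof -
  define Q1 where "Q1 = out_distr W (marg1 R)"
  define Q2 where "Q2 = out_distr W' (marg2 R)"
  define A where "A y = ln (W x y / Q1 y)" for y
  define B where "B y' = ln (W' x' y' / Q2 y')" for y'
  define D where "D = rel_ent (W x) Q1"
  define D' where "D' = rel_ent (W' x') Q2"
  have Rp: "0 < R (x, x')" using pos distr_nonneg[OF R, of "(x,x')"] by simp
  have m1: "R (x, x') \<le> marg1 R x" unfolding marg1_def
    by (rule member_le_sum[where f="\<lambda>x'. R (x, x')"]) (auto intro: distr_nonneg[OF R])
  have m2: "R (x, x') \<le> marg2 R x'" unfolding marg2_def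
    by (rule member_le_sum[where f="\<lambda>x. R (x, x')"]) (auto intro: distr_nonneg[OF R])
  have q1: "W x y \<noteq> 0 \<Longrightarrow> 0 < Q1 y" for y unfolding Q1_def
    using out_pos[OF marg1_distr[OF R] ch(1)] m1 Rp by force
  have q2: "W' x' y' \<noteq> 0 \<Longrightarrow> 0 < Q2 y'" for y' unfolding Q2_def
    using out_pos[OF marg2_distr[OF R] ch(2)] m2 Rp by force
  have L: "W x y * W' x' y' * h (ln (W x y * W' x' y' / (Q1 y * Q2 y'))) = W x y * W' x' y' * h (A y + B y')" for y y' h
  proof (cases "W x y = 0 \<or> W' x' y' = 0")
    case True thus ?thesis by auto
  next
    case False
    hence p: "0 < W x y" "0 < W' x' y'" "0 < Q1 y" "0 < Q2 y'"
      using q1 q2 ch_nonneg[OF ch(1), of x y] ch_nonneg[OF ch(2), of x' y'] by auto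
    have "W x y * W' x' y' / (Q1 y * Q2 y') = (W x y / Q1 y) * (W' x' y' / Q2 y')" by simp
    hence "ln (W x y * W' x' y' / (Q1 y * Q2 y')) = A y + B y'"
      by (simp only: ln_mult_pos[OF divide_pos_pos[OF p(1) p(3)] divide_pos_pos[OF p(2) p(4)]] A_def B_def)
    thus ?thesis by simp
  qed
  have QR: "out_distr (prod_channel W W') R (y, y') = Q1 y * Q2 y'" for y y'
    using hQ by (simp add: pprod_def Q1_def Q2_def)
  have sA: "(\<Sum>y\<in>UNIV. W x y) = 1" and sB: "(\<Sum>y'\<in>UNIV. W' x' y') = 1" using ch_sum ch by auto
  have DA: "D = (\<Sum>y\<in>UNIV. W x y * A y)" unfolding D_def rel_ent_simp A_def ..
  have DB: "D' = (\<Sum>y'\<in>UNIV. W' x' y' * B y')" unfolding D'_def rel_ent_simp B_def ..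
  have E: "rel_ent (prod_channel W W' (x, x')) (out_distr (prod_channel W W') R) = D + D'"
  proof -
    have "rel_ent (prod_channel W W' (x, x')) (out_distr (prod_channel W W') R)
       = (\<Sum>y\<in>UNIV. \<Sum>y'\<in>UNIV. W x y * W' x' y' * ln (W x y * W' x' y' / (Q1 y * Q2 y')))"
      unfolding rel_ent_simp by (simp add: sum_univ_prod prod_channel_app QR)
    also have "\<dots> = (\<Sum>y\<in>UNIV. \<Sum>y'\<in>UNIV. W x y * W' x' y' * (A y + B y'))"
      by (intro sum.cong refl) (rule L[where h="\<lambda>t. t"])
    also have "\<dots> = (\<Sum>y\<in>UNIV. W x y * A y) * (\<Sum>y'\<in>UNIV. W' x' y') + (\<Sum>y\<in>UNIV. W x y) * (\<Sum>y'\<in>UNIV. W' x' y' * B y')"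
    proof -
      have "(\<Sum>y\<in>UNIV. \<Sum>y'\<in>UNIV. W x y * W' x' y' * (A y + B y'))
          = (\<Sum>y\<in>UNIV. \<Sum>y'\<in>UNIV. (W x y * A y) * W' x' y' + W x y * (W' x' y' * B y'))"
        by (intro sum.cong refl) (simp add: algebra_simps)
      also have "\<dots> = (\<Sum>y\<in>UNIV. \<Sum>y'\<in>UNIV. (W x y * A y) * W' x' y') + (\<Sum>y\<in>UNIV. \<Sum>y'\<in>UNIV. W x y * (W' x' y' * B y'))"
        by (simp only: sum.distrib)
      finally show ?thesis by (simp only: dsum_prod)
    qed
    finally show ?thesis using sA sB DA DB by simp
  qed
  have "(\<Sum>w\<in>UNIV. prod_channel W W' (x, x') w * (ln (prod_channel W W' (x, x') w / out_distr (prod_channel W W') R w)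
            - rel_ent (prod_channel W W' (x, x')) (out_distr (prod_channel W W') R))\<^sup>2)
      = (\<Sum>y\<in>UNIV. \<Sum>y'\<in>UNIV. W x y * W' x' y' * (ln (W x y * W' x' y' / (Q1 y * Q2 y')) - (D + D'))\<^sup>2)"
    unfolding E by (simp add: sum_univ_prod prod_channel_app QR)
  also have "\<dots> = (\<Sum>y\<in>UNIV. \<Sum>y'\<in>UNIV. W x y * W' x' y' * ((A y - D) + (B y' - D'))\<^sup>2)"
  proof (intro sum.cong refl)
    fix y y'
    show "W x y * W' x' y' * (ln (W x y * W' x' y' / (Q1 y * Q2 y')) - (D + D'))\<^sup>2 = W x y * W' x' y' * ((A y - D) + (B y' - D'))\<^sup>2"
      using L[where h="\<lambda>t. (t - (D + D'))\<^sup>2", of y y'] by (simp add: algebra_simps)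
  qed
  also have "\<dots> = (\<Sum>y\<in>UNIV. W x y * (A y - D)\<^sup>2) * 1 + 2 * (\<Sum>y\<in>UNIV. W x y * (A y - D)) * (\<Sum>y'\<in>UNIV. W' x' y' * (B y' - D'))
      + 1 * (\<Sum>y'\<in>UNIV. W' x' y' * (B y' - D')\<^sup>2)"
    unfolding double_sq_sum sA sB ..
  also have "(\<Sum>y\<in>UNIV. W x y * (A y - D)) = 0"
    using sA DA by (simp add: right_diff_distrib sum_subtractf sum_distrib_right[symmetric])
  finally show ?thesis by (simp add: A_def B_def D_def D'_def Q1_def Q2_def)
qed


lemma disp_prod:
  fixes W :: "'x::finite \<Rightarrow> 'y::finite \<Rightarrow> real"
    and W' :: "'x'::finite \<Rightarrow> 'y'::finite \<Rightarrow> real"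
  assumes R: "is_distr R" and ch: "is_channel W" "is_channel W'"
    and hQ: "out_distr (prod_channel W W') R = pprod (out_distr W (marg1 R)) (out_distr W' (marg2 R))"
  shows "dispersion R (prod_channel W W') = dispersion (marg1 R) W + dispersion (marg2 R) W'"
proof -
  define V where "V x = (\<Sum>y\<in>UNIV. W x y * (ln (W x y / out_distr W (marg1 R) y) - rel_ent (W x) (out_distr W (marg1 R)))\<^sup>2)" for x
  define V' where "V' x' = (\<Sum>y'\<in>UNIV. W' x' y' * (ln (W' x' y' / out_distr W' (marg2 R) y') - rel_ent (W' x') (out_distr W' (marg2 R)))\<^sup>2)" for x'
  have "dispersion R (prod_channel W W') = (\<Sum>z\<in>UNIV. R z * (V (fst z) + V' (snd z)))"
    unfolding dispersion_simp
  proof (intro sum.cong refl)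
    fix z :: "'x \<times> 'x'"
    obtain x x' where zz: "z = (x, x')" by (cases z)
    show "R z * (\<Sum>w\<in>UNIV. prod_channel W W' z w * (ln (prod_channel W W' z w / out_distr (prod_channel W W') R w)
            - rel_ent (prod_channel W W' z) (out_distr (prod_channel W W') R))\<^sup>2) = R z * (V (fst z) + V' (snd z))"
    proof (cases "R z = 0")
      case True thus ?thesis by simp
    next
      case False thus ?thesis unfolding zz V_def V'_def using inner_split[OF R ch hQ, of x x'] zz by simp
    qed
  qed
  also have "\<dots> = (\<Sum>x\<in>UNIV. \<Sum>x'\<in>UNIV. R (x, x') * V x) + (\<Sum>x\<in>UNIV. \<Sum>x'\<in>UNIV. R (x, x') * V' x')"
    by (simp add: sum_univ_prod algebra_simps sum.distrib)
  also have "\<dots> = (\<Sum>x\<in>UNIV. marg1 R x * V x) + (\<Sum>x'\<in>UNIV. marg2 R x' * V' x')"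
    unfolding marg1_def marg2_def by (subst (2) sum.swap) (simp add: sum_distrib_right)
  also have "\<dots> = dispersion (marg1 R) W + dispersion (marg2 R) W'"
    unfolding dispersion_simp V_def V'_def ..
  finally show ?thesis .
qed


lemma tln2_le: assumes "0 < t" "t \<le> (1::real)" shows "t * (ln t)\<^sup>2 \<le> 4"
proof -
  define s where "s = sqrt t"
  have sp: "0 < s" "s \<le> 1" using assms by (auto simp: s_def)
  have ts: "t = s * s" using assms by (simp add: s_def)
  have lt: "ln t = 2 * ln s" using sp by (simp add: ts ln_mult_pos)
  have l0: "ln s \<le> 0" using sp by simp
  have "- ln s = ln (1 / s)" using sp by (simp add: ln_div)
  also have "\<dots> \<le> 1 / s - 1" using sp by (intro ln_le_minus_one) simp
  finally have "- ln s \<le> 1 / s" by simp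
  hence "(- ln s)\<^sup>2 \<le> (1 / s)\<^sup>2" using l0 by (intro power_mono) auto
  hence "(ln s)\<^sup>2 \<le> 1 / (s * s)" by (simp add: power2_eq_square)
  hence "s * s * (ln s)\<^sup>2 \<le> 1" using sp by (simp add: field_simps)
  moreover have "t * (ln t)\<^sup>2 = 4 * (s * s * (ln s)\<^sup>2)" unfolding lt by (simp add: ts power2_eq_square algebra_simps)
  ultimately show ?thesis by simp
qed

lemma disp_nonneg: assumes "is_distr P" "is_channel W" shows "0 \<le> dispersion P W"
  unfolding dispersion_simp using distr_nonneg[OF assms(1)] ch_nonneg[OF assms(2)]
  by (intro sum_nonneg mult_nonneg_nonneg) auto

lemma disp_le:
  fixes W :: "'x::finite \<Rightarrow> 'y::finite \<Rightarrow> real"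
  assumes d: "is_distr P" and ch: "is_channel W"
  shows "dispersion P W \<le> 8 * real CARD('x) * real CARD('y)"
proof -
  let ?Q = "out_distr W P"
  define L where "L x y = ln (W x y / ?Q y)" for x y
  have var: "(\<Sum>y\<in>UNIV. W x y * (L x y - rel_ent (W x) ?Q)\<^sup>2) \<le> (\<Sum>y\<in>UNIV. W x y * (L x y)\<^sup>2)" for x
  proof -
    define D where "D = rel_ent (W x) ?Q"
    have DD: "D = (\<Sum>y\<in>UNIV. W x y * L x y)" unfolding D_def rel_ent_simp L_def ..
    have "(\<Sum>y\<in>UNIV. W x y * (L x y - D)\<^sup>2) = (\<Sum>y\<in>UNIV. W x y * (L x y)\<^sup>2 - 2 * D * (W x y * L x y) + D\<^sup>2 * W x y)"
      by (intro sum.cong refl) (simp add: power2_diff algebra_simps)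
    also have "\<dots> = (\<Sum>y\<in>UNIV. W x y * (L x y)\<^sup>2) - 2 * D * D + D\<^sup>2 * 1"
      using ch_sum[OF ch, of x] by (simp add: sum.distrib sum_subtractf sum_distrib_left[symmetric] DD)
    finally show ?thesis unfolding D_def[symmetric] by (simp add: power2_eq_square)
  qed
  have pt: "P x * (W x y * (L x y)\<^sup>2) \<le> 8" for x y
  proof (cases "P x = 0 \<or> W x y = 0")
    case True thus ?thesis by auto
  next
    case False
    have p: "0 < P x" "P x \<le> 1" using False distr_nonneg[OF d, of x] distr_le1[OF d, of x] by auto
    have a: "0 < W x y" "W x y \<le> 1" using False ch_nonneg[OF ch, of x y] distr_le1[of "W x" y] ch
      by (auto simp: is_channel_def)
    have q: "P x * W x y \<le> ?Q y" by (rule out_ge[OF d ch])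
    have q1: "?Q y \<le> 1" by (rule distr_le1[OF out_distr_distr[OF d ch]])
    have qp: "0 < ?Q y" using q p a by (meson mult_pos_pos less_le_trans)
    have LL: "L x y = ln (W x y) - ln (?Q y)" unfolding L_def using a qp by (simp add: ln_divide_pos)
    have u: "L x y \<le> - ln (P x)"
    proof -
      have "ln (P x * W x y) \<le> ln (?Q y)" using q p a qp by (subst ln_le_cancel_iff) auto
      thus ?thesis using LL p a by (simp add: ln_mult_pos)
    qed
    have l: "ln (W x y) \<le> L x y" using LL q1 qp by simp
    have lp: "ln (P x) \<le> 0" and la: "ln (W x y) \<le> 0" using p a by auto
    have sq: "(L x y)\<^sup>2 \<le> (ln (W x y))\<^sup>2 + (ln (P x))\<^sup>2"
    proof (cases "0 \<le> L x y")
      case True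
      hence "(L x y)\<^sup>2 \<le> (- ln (P x))\<^sup>2" using u by (intro power_mono) auto
      hence "(L x y)\<^sup>2 \<le> (ln (P x))\<^sup>2" by simp
      thus ?thesis using zero_le_power2[of "ln (W x y)"] by linarith
    next
      case False
      hence "(- L x y)\<^sup>2 \<le> (- ln (W x y))\<^sup>2" using l by (intro power_mono) auto
      hence "(L x y)\<^sup>2 \<le> (ln (W x y))\<^sup>2" by simp
      thus ?thesis using zero_le_power2[of "ln (P x)"] by linarith
    qed
    have "P x * (W x y * (L x y)\<^sup>2) \<le> P x * (W x y * ((ln (W x y))\<^sup>2 + (ln (P x))\<^sup>2))"
      using sq p a by (intro mult_left_mono) auto
    also have "\<dots> = P x * (W x y * (ln (W x y))\<^sup>2) + W x y * (P x * (ln (P x))\<^sup>2)" by (simp add: algebra_simps)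
    also have "\<dots> \<le> 1 * 4 + 1 * 4"
      using tln2_le[OF a] tln2_le[OF p] p a
      by (intro add_mono mult_mono) auto
    finally show ?thesis by simp
  qed
  have "dispersion P W \<le> (\<Sum>x\<in>UNIV. P x * (\<Sum>y\<in>UNIV. W x y * (L x y)\<^sup>2))"
    unfolding dispersion_simp L_def[symmetric]
    by (rule sum_mono, rule mult_left_mono[OF var distr_nonneg[OF d]])
  also have "\<dots> = (\<Sum>x\<in>UNIV. \<Sum>y\<in>UNIV. P x * (W x y * (L x y)\<^sup>2))" by (simp add: sum_distrib_left)
  also have "\<dots> \<le> (\<Sum>x\<in>(UNIV::'x set). \<Sum>y\<in>(UNIV::'y set). 8)" by (intro sum_mono pt)
  also have "\<dots> = 8 * real CARD('x) * real CARD('y)" by simp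
  finally show ?thesis .
qed


lemma sup_sum:
  fixes f :: "'a \<Rightarrow> real" and g :: "'b \<Rightarrow> real"
  assumes A: "A \<noteq> {}" and B: "B \<noteq> {}" and bf: "bdd_above (f ` A)" and bg: "bdd_above (g ` B)"
  shows "Sup ((\<lambda>(a, b). f a + g b) ` (A \<times> B)) = Sup (f ` A) + Sup (g ` B)"
proof -
  let ?S = "Sup ((\<lambda>(a, b). f a + g b) ` (A \<times> B))"
  have up: "f a + g b \<le> Sup (f ` A) + Sup (g ` B)" if "a \<in> A" "b \<in> B" for a b
    using cSUP_upper[OF that(1) bf] cSUP_upper[OF that(2) bg] by simp
  have bdd: "bdd_above ((\<lambda>(a, b). f a + g b) ` (A \<times> B))"
    using up by (intro bdd_aboveI[where M="Sup (f ` A) + Sup (g ` B)"]) auto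
  have le: "?S \<le> Sup (f ` A) + Sup (g ` B)"
    using A B up by (intro cSup_least) auto
  have "Sup (g ` B) \<le> ?S - Sup (f ` A)"
  proof (rule cSUP_least[OF B])
    fix b assume b: "b \<in> B"
    have "Sup (f ` A) \<le> ?S - g b"
    proof (rule cSUP_least[OF A])
      fix a assume a: "a \<in> A"
      have "f a + g b \<le> ?S" using a b bdd by (intro cSup_upper) auto
      thus "f a \<le> ?S - g b" by simp
    qed
    thus "g b \<le> ?S - Sup (f ` A)" by simp
  qed
  thus ?thesis using le by simp
qed

lemma inf_sum:
  fixes f :: "'a \<Rightarrow> real" and g :: "'b \<Rightarrow> real"
  assumes A: "A \<noteq> {}" and B: "B \<noteq> {}" and bf: "bdd_below (f ` A)" and bg: "bdd_below (g ` B)"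
  shows "Inf ((\<lambda>(a, b). f a + g b) ` (A \<times> B)) = Inf (f ` A) + Inf (g ` B)"
proof -
  let ?S = "Inf ((\<lambda>(a, b). f a + g b) ` (A \<times> B))"
  have lo: "Inf (f ` A) + Inf (g ` B) \<le> f a + g b" if "a \<in> A" "b \<in> B" for a b
    using cINF_lower[OF bf that(1)] cINF_lower[OF bg that(2)] by simp
  have bdd: "bdd_below ((\<lambda>(a, b). f a + g b) ` (A \<times> B))"
    using lo by (intro bdd_belowI[where m="Inf (f ` A) + Inf (g ` B)"]) auto
  have ge: "Inf (f ` A) + Inf (g ` B) \<le> ?S"
    using A B lo by (intro cInf_greatest) auto
  have "?S - Inf (f ` A) \<le> Inf (g ` B)"
  proof (rule cINF_greatest[OF B])
    fix b assume b: "b \<in> B"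
    have "?S - g b \<le> Inf (f ` A)"
    proof (rule cINF_greatest[OF A])
      fix a assume a: "a \<in> A"
      have "?S \<le> f a + g b" using a b bdd by (intro cInf_lower) auto
      thus "?S - g b \<le> f a" by simp
    qed
    thus "?S - Inf (f ` A) \<le> g b" by simp
  qed
  thus ?thesis using ge by simp
qed

lemma disp_image:
  fixes W :: "'x::finite \<Rightarrow> 'y::finite \<Rightarrow> real"
    and W' :: "'x'::finite \<Rightarrow> 'y'::finite \<Rightarrow> real"
  assumes ch: "is_channel W" "is_channel W'"
  shows "(\<lambda>R. dispersion R (prod_channel W W')) ` optimal_inputs (prod_channel W W')
    = (\<lambda>(P, P'). dispersion P W + dispersion P' W') ` (optimal_inputs W \<times> optimal_inputs W')"
proof
  show "(\<lambda>R. dispersion R (prod_channel W W')) ` optimal_inputs (prod_channel W W')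
    \<subseteq> (\<lambda>(P, P'). dispersion P W + dispersion P' W') ` (optimal_inputs W \<times> optimal_inputs W')"
  proof
    fix v assume "v \<in> (\<lambda>R. dispersion R (prod_channel W W')) ` optimal_inputs (prod_channel W W')"
    then obtain R where R: "R \<in> optimal_inputs (prod_channel W W')" and v: "v = dispersion R (prod_channel W W')" by blast
    have Rd: "is_distr R" using R by (simp add: optimal_inputs_def)
    have "v = dispersion (marg1 R) W + dispersion (marg2 R) W'"
      using v disp_prod[OF Rd ch opt_prod1(3)[OF ch R]] by simp
    thus "v \<in> (\<lambda>(P, P'). dispersion P W + dispersion P' W') ` (optimal_inputs W \<times> optimal_inputs W')"
      using opt_prod1(1,2)[OF ch R] by force
  qed
  show "(\<lambda>(P, P'). dispersion P W + dispersion P' W') ` (optimal_inputs W \<times> optimal_inputs W')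
    \<subseteq> (\<lambda>R. dispersion R (prod_channel W W')) ` optimal_inputs (prod_channel W W')"
  proof
    fix v assume "v \<in> (\<lambda>(P, P'). dispersion P W + dispersion P' W') ` (optimal_inputs W \<times> optimal_inputs W')"
    then obtain P P' where P: "P \<in> optimal_inputs W" and P': "P' \<in> optimal_inputs W'"
      and v: "v = dispersion P W + dispersion P' W'" by auto
    have Pd: "is_distr P" "is_distr P'" using P P' by (auto simp: optimal_inputs_def)
    have R: "pprod P P' \<in> optimal_inputs (prod_channel W W')" by (rule opt_prod2[OF ch P P'])
    have "dispersion (pprod P P') (prod_channel W W') = v"
      using disp_prod[OF pprod_distr[OF Pd] ch opt_prod1(3)[OF ch R]] v
      by (simp add: marg1_pprod[OF Pd(2)] marg2_pprod[OF Pd(1)])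
    thus "v \<in> (\<lambda>R. dispersion R (prod_channel W W')) ` optimal_inputs (prod_channel W W')"
      using R by force
  qed
qed

lemma opt_facts:
  fixes W :: "'x::finite \<Rightarrow> 'y::finite \<Rightarrow> real"
  assumes ch: "is_channel W"
  shows "optimal_inputs W \<noteq> {}" "bdd_above ((\<lambda>P. dispersion P W) ` optimal_inputs W)"
    "bdd_below ((\<lambda>P. dispersion P W) ` optimal_inputs W)"
proof -
  show "optimal_inputs W \<noteq> {}" using cap_props(1)[OF ch] by (auto simp: optimal_inputs_def)
  show "bdd_above ((\<lambda>P. dispersion P W) ` optimal_inputs W)"
    using disp_le[OF _ ch] by (intro bdd_aboveI[where M="8 * real CARD('x) * real CARD('y)"]) (auto simp: optimal_inputs_def)
  show "bdd_below ((\<lambda>P. dispersion P W) ` optimal_inputs W)"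
    using disp_nonneg[OF _ ch] by (intro bdd_belowI[where m=0]) (auto simp: optimal_inputs_def)
qed

theorem lemma3:
  fixes W :: "'x::finite \<Rightarrow> 'y::finite \<Rightarrow> real"
    and W' :: "'x'::finite \<Rightarrow> 'y'::finite \<Rightarrow> real"
  assumes "is_channel W" and "is_channel W'"
  shows "Vplus (prod_channel W W') = Vplus W + Vplus W'
    \<and> Vminus (prod_channel W W') = Vminus W + Vminus W'"
proof -
  note ch = assms
  have e: "(\<lambda>(P, P'). dispersion P W + dispersion P' W') = (\<lambda>(P, P'). (\<lambda>P. dispersion P W) P + (\<lambda>P'. dispersion P' W') P')"
    by simp
  show ?thesis
    unfolding Vplus_def Vminus_def disp_image[OF ch]
    using sup_sum[OF opt_facts(1)[OF ch(1)] opt_facts(1)[OF ch(2)] opt_facts(2)[OF ch(1)] opt_facts(2)[OF ch(2)]]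
      inf_sum[OF opt_facts(1)[OF ch(1)] opt_facts(1)[OF ch(2)] opt_facts(3)[OF ch(1)] opt_facts(3)[OF ch(2)]]
    by simp
qed

end
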